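(* Let $\beta_{H\leftarrow M},\beta_{M\leftarrow H},\rho,\gamma,\mu>0$, $l\ge0$, $p,q\in[0,1]$ with $c(p,q)+l>0$. For every solution of system (VBH) with initial condition in $\Omega$, $$\lim_{t\to+\infty}I_P(t)=\lim_{t\to+\infty}I_{NP}(t)=\lim_{t\to+\infty}I_M(t)=0.$$
   Context: Let $c(p,q):=1-p(1-q)$. System (VBH) is the ODE system $$S_P'=-\beta_{H\leftarrow M}\rho I_M\frac{qS_P}{c(p,q)+l},\qquad I_P'=\beta_{H\leftarrow M}\rho I_M\frac{qS_P}{c(p,q)+l}-\gamma I_P,$$ $$S_{NP}'=-\beta_{H\leftarrow M}\rho I_M\frac{S_{NP}}{c(p,q)+l},\qquad I_{NP}'=\beta_{H\leftarrow M}\rho I_M\frac{S_{NP}}{c(p,q)+l}-\gamma I_{NP},$$ $$I_M'=\beta_{M\leftarrow H}(1-I_M)\frac{qI_P+I_{NP}}{c(p,q)+l}-\mu I_M,$$ with constant parameters $p,q,l$. Let $\Omega:=\{(S_P,I_P,S_{NP},I_{NP},I_M)\in\mathbb{R}^5_{\ge0}:\ S_P+I_P+S_{NP}+I_{NP}\le1,\ I_M\le1\}$. *)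

theory Defs
  imports "HOL-Analysis.Analysis"
begin

definition c_pq :: "real \<Rightarrow> real \<Rightarrow> real" where
  "c_pq p q = 1 - p * (1 - q)"

definition Omega :: "(real \<times> real \<times> real \<times> real \<times> real) set" where
  "Omega = {(sP, iP, sNP, iNP, iM). 0 \<le> sP \<and> 0 \<le> iP \<and> 0 \<le> sNP \<and> 0 \<le> iNP \<and> 0 \<le> iM
             \<and> sP + iP + sNP + iNP \<le> 1 \<and> iM \<le> 1}"

end

theory Submission
  imports Defs "HOL-Real_Asymp.Real_Asymp"
begin


lemma deriv_cont:
  fixes f f' :: "real \<Rightarrow> real"
  assumes d: "\<And>t. t \<ge> 0 \<Longrightarrow> (f has_real_derivative f' t) (at t within {0..})"
  shows "continuous_on {0..} f"
  unfolding continuous_on_eq_continuous_within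
  using d DERIV_continuous by (metis atLeast_iff)

lemma mono_lem:
  fixes f f' :: "real \<Rightarrow> real"
  assumes d: "\<And>t. t \<ge> 0 \<Longrightarrow> (f has_real_derivative f' t) (at t within {0..})"
    and a0: "0 \<le> a" and ab: "a \<le> b" and nn: "\<And>t. a \<le> t \<Longrightarrow> t \<le> b \<Longrightarrow> f' t \<ge> 0"
  shows "f a \<le> f b"
proof (rule DERIV_nonneg_imp_increasing_open[OF ab])
  fix x assume x: "a < x" "x < b"
  then have "x \<in> interior {0::real..}" using a0 by (simp add: interior_real_atLeast)
  moreover have "(f has_real_derivative f' x) (at x within {0..})" using d[of x] x a0 by simp
  ultimately have "(f has_real_derivative f' x) (at x)" using at_within_interior by metis
  then show "\<exists>y. DERIV f x :> y \<and> y \<ge> 0" using nn x by auto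
next
  show "continuous_on {a..b} f"
    by (rule continuous_on_subset[OF deriv_cont[OF d]]) (use a0 in auto)
qed

lemma bound_lem:
  fixes f :: "real \<Rightarrow> real"
  assumes "continuous_on {0..} f" "0 \<le> a"
  shows "\<exists>M. \<forall>t\<in>{a..b}. \<bar>f t\<bar> \<le> M"
proof -
  have "continuous_on {a..b} f" by (rule continuous_on_subset[OF assms(1)]) (use assms in auto)
  hence "compact (f ` {a..b})" by (intro compact_continuous_image) auto
  hence "bounded (f ` {a..b})" by (rule compact_imp_bounded)
  thus ?thesis unfolding bounded_real by auto
qed

lemma comp_lem:
  fixes x F :: "real \<Rightarrow> real"
  assumes d: "\<And>t. t \<ge> 0 \<Longrightarrow> (x has_real_derivative (F t - r * x t)) (at t within {0..})"
    and r: "r \<ge> 0" and s: "0 \<le> s" "s \<le> t1" and xs: "x s \<ge> 0"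
    and Fb: "\<And>t. s \<le> t \<Longrightarrow> t \<le> t1 \<Longrightarrow> F t \<ge> - D" and D: "D \<ge> 0"
  shows "x t1 \<ge> - D * (t1 - s)"
proof -
  define E where "E = exp (r * t1)"
  have E: "E > 0" unfolding E_def by simp
  define y where "y t = x t * exp (r * t) + D * E * t" for t
  have dy: "(y has_real_derivative (F t * exp (r * t) + D * E)) (at t within {0..})" if "t \<ge> 0" for t
    unfolding y_def
    by (rule derivative_eq_intros d[OF that] refl | simp add: algebra_simps)+
  have "y s \<le> y t1"
  proof (rule mono_lem[OF dy s])
    fix t assume t: "s \<le> t" "t \<le> t1"
    have "exp (r * t) \<le> E" unfolding E_def using t r by (simp add: mult_left_mono)
    hence "D * exp (r * t) \<le> D * E" using D by (simp add: mult_left_mono)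
    moreover have "F t * exp (r * t) \<ge> - D * exp (r * t)" using Fb[OF t] by (intro mult_right_mono) auto
    ultimately show "0 \<le> F t * exp (r * t) + D * E" by linarith
  qed
  hence "x s * exp (r * s) + D * E * s \<le> x t1 * E + D * E * t1" unfolding y_def E_def by simp
  moreover have "x s * exp (r * s) \<ge> 0" using xs by simp
  ultimately have "E * (- D * (t1 - s)) \<le> E * x t1" by (simp add: algebra_simps)
  thus ?thesis using E by (metis mult_le_cancel_left_pos)
qed

lemma exit_lem:
  fixes g :: "real \<Rightarrow> real"
  assumes cont: "continuous_on {0..} g" and g0: "g 0 \<ge> 0"
    and step: "\<And>s. s \<ge> 0 \<Longrightarrow> (\<forall>t\<in>{0..s}. g t \<ge> 0) \<Longrightarrow> \<exists>\<delta>>0. \<forall>t1 N. s \<le> t1 \<longrightarrow> t1 \<le> s+\<delta> \<longrightarrow> N \<ge> 0 \<longrightarrow> (\<forall>t\<in>{s..t1}. g t \<ge> -N) \<longrightarrow> g t1 \<ge> -(N/2)"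
    and T: "T \<ge> 0"
  shows "g T \<ge> 0"
proof (rule ccontr)
  assume neg: "\<not> g T \<ge> 0"
  define B where "B = {t. 0 \<le> t \<and> g t < 0}"
  define s where "s = Inf B"
  have TB: "T \<in> B" using T neg B_def by auto
  have bdd: "bdd_below B" unfolding B_def by (rule bdd_belowI[of _ 0]) auto
  have s0: "s \<ge> 0" unfolding s_def using TB by (intro cInf_greatest) (auto simp: B_def)
  have below: "g t \<ge> 0" if "0 \<le> t" "t < s" for t
  proof (rule ccontr)
    assume "\<not> g t \<ge> 0" hence "t \<in> B" using that B_def by auto
    hence "s \<le> t" unfolding s_def using bdd by (simp add: cInf_lower)
    with that show False by simp
  qed
  have gs: "g s \<ge> 0"
  proof (cases "s = 0")
    case True thus ?thesis using g0 by simp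
  next
    case False hence sp: "s > 0" using s0 by simp
    have cl: "closure {0..<s} = {0..s}" using sp by (simp add: closure_atLeastLessThan)
    have "continuous_on {0..s} g" by (rule continuous_on_subset[OF cont]) auto
    then show ?thesis using continuous_ge_on_closure[of "{0..<s}" g s 0] below cl s0 by auto
  qed
  have allbelow: "\<forall>t\<in>{0..s}. g t \<ge> 0" using below gs by (metis atLeastAtMost_iff order_less_le)
  obtain \<delta> where \<delta>: "\<delta> > 0" and st: "\<And>t1 N. s \<le> t1 \<Longrightarrow> t1 \<le> s+\<delta> \<Longrightarrow> N \<ge> 0 \<Longrightarrow> (\<forall>t\<in>{s..t1}. g t \<ge> -N) \<Longrightarrow> g t1 \<ge> -(N/2)"
    using step[OF s0 allbelow] by blast
  have "Inf B < s + \<delta>" using \<delta> s_def by simp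
  then obtain t2 where t2: "t2 \<in> B" "t2 < s+\<delta>" using cInf_less_iff[of B] TB bdd by blast
  have st2: "s \<le> t2" unfolding s_def using bdd t2 by (simp add: cInf_lower)
  have "continuous_on {s..t2} g" by (rule continuous_on_subset[OF cont]) (use s0 in auto)
  then obtain tm where tm: "tm \<in> {s..t2}" "\<forall>y\<in>{s..t2}. g tm \<le> g y"
    using continuous_attains_inf[of "{s..t2}" g] st2 by auto
  define N where "N = - g tm"
  have "g t2 < 0" using t2 B_def by auto
  moreover have "g tm \<le> g t2" using tm st2 by auto
  ultimately have Np: "N > 0" using N_def by linarith
  have "g tm \<ge> -(N/2)"
    by (rule st) (use tm t2 Np N_def in auto)
  thus False using Np N_def by simp
qed

lemma small_lem:
  fixes K N d :: real
  assumes "K > 0" "N \<ge> 0" "0 \<le> d" "d \<le> 1 / (4 * K)"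
  shows "- (2 * K * N) * d \<ge> - (N / 2)"
proof -
  have "2 * K * N * d \<le> 2 * K * N * (1 / (4 * K))"
    using assms by (intro mult_left_mono) auto
  also have "\<dots> = N / 2" using assms by (simp add: field_simps)
  finally show ?thesis by simp
qed

lemma lin_nonneg:
  fixes x k f :: "real \<Rightarrow> real"
  assumes d: "\<And>t. t \<ge> 0 \<Longrightarrow> (x has_real_derivative (k t * x t + f t)) (at t within {0..})"
    and kc: "continuous_on {0..} k" and f: "\<And>t. t \<ge> 0 \<Longrightarrow> f t \<ge> 0"
    and x0: "x 0 \<ge> 0" and T: "T \<ge> 0"
  shows "x T \<ge> 0"
proof (rule exit_lem[OF deriv_cont[OF d] x0 _ T])
  fix s :: real assume s0: "s \<ge> 0" and all: "\<forall>t\<in>{0..s}. x t \<ge> 0"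
  obtain M where M: "\<forall>t\<in>{s..s+1}. \<bar>k t\<bar> \<le> M" using bound_lem[OF kc s0] by blast
  define K where "K = M + 1"
  have "\<bar>k s\<bar> \<le> M" using M by auto
  hence Kp: "K > 0" unfolding K_def by linarith
  show "\<exists>\<delta>>0. \<forall>t1 N. s \<le> t1 \<longrightarrow> t1 \<le> s+\<delta> \<longrightarrow> N \<ge> 0 \<longrightarrow> (\<forall>t\<in>{s..t1}. x t \<ge> -N) \<longrightarrow> x t1 \<ge> -(N/2)"
  proof (intro exI[of _ "min 1 (1/(4*K))"] conjI allI impI)
    show "min 1 (1/(4*K)) > 0" using Kp by simp
    fix t1 N assume t1: "s \<le> t1" "t1 \<le> s + min 1 (1/(4*K))" and N: "N \<ge> 0"
      and low: "\<forall>t\<in>{s..t1}. x t \<ge> -N"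
    have A: "x t1 \<ge> - (2*K*N) * (t1 - s)"
    proof (rule comp_lem[where F="\<lambda>t. (k t + K) * x t + f t" and r=K])
      fix t :: real assume "t \<ge> 0"
      have eq: "(k t + K) * x t + f t - K * x t = k t * x t + f t" by algebra
      show "(x has_real_derivative ((k t + K) * x t + f t - K * x t)) (at t within {0..})"
        by (subst eq) (rule d[OF \<open>t \<ge> 0\<close>])
    next
      fix t assume t: "s \<le> t" "t \<le> t1"
      have "t \<in> {s..s+1}" using t t1 by auto
      hence "\<bar>k t\<bar> \<le> M" using M by blast
      hence kb: "0 \<le> k t + K" "k t + K \<le> 2 * K" unfolding K_def by (auto simp: abs_le_iff)
      have xb: "x t \<ge> -N" using low t by auto
      have "(k t + K) * x t \<ge> - (2 * K * N)"
      proof (cases "x t \<ge> 0")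
        case True
        have "(k t + K) * x t \<ge> 0" using True kb by simp
        moreover have "2 * K * N \<ge> 0" using Kp N by simp
        ultimately show ?thesis by linarith
      next
        case False
        hence "(k t + K) * x t \<ge> 2 * K * x t" using kb by (intro mult_right_mono_neg) auto
        moreover have "2 * K * x t \<ge> 2 * K * (-N)" using xb Kp by (intro mult_left_mono) auto
        ultimately show ?thesis by simp
      qed
      moreover have "f t \<ge> 0" using f t s0 by auto
      ultimately show "(k t + K) * x t + f t \<ge> - (2 * K * N)" by linarith
    qed (use Kp N s0 t1 all in auto)
    have "- (2*K*N) * (t1 - s) \<ge> - (N / 2)" using t1 by (intro small_lem Kp N) auto
    with A show "x t1 \<ge> -(N/2)" by linarith
  qed
qed



lemma DERIV_eq: "(f has_real_derivative D) F \<Longrightarrow> D = E \<Longrightarrow> (f has_real_derivative E) F" by simp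

lemma lin_nonneg':
  fixes x k f D :: "real \<Rightarrow> real"
  assumes d: "\<And>t. t \<ge> 0 \<Longrightarrow> (x has_real_derivative D t) (at t within {0..})"
    and eqD: "\<And>t. t \<ge> 0 \<Longrightarrow> D t = k t * x t + f t"
    and kc: "continuous_on {0..} k" and f: "\<And>t. t \<ge> 0 \<Longrightarrow> f t \<ge> 0"
    and x0: "x 0 \<ge> 0" and T: "T \<ge> 0"
  shows "x T \<ge> 0"
proof (rule lin_nonneg[where k=k and f=f and x=x, OF _ kc f x0 T])
  fix t :: real assume "t \<ge> 0"
  with d[of t] eqD[of t] show "(x has_real_derivative k t * x t + f t) (at t within {0..})" by simp
qed auto

lemma antitone_lim:
  fixes f :: "real \<Rightarrow> real"
  assumes mono: "\<And>x y. 0 \<le> x \<Longrightarrow> x \<le> y \<Longrightarrow> f y \<le> f x" and nn: "\<And>x. 0 \<le> x \<Longrightarrow> f x \<ge> 0"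
  shows "\<exists>L. (f \<longlongrightarrow> L) at_top"
proof -
  define L where "L = Inf (f ` {0..})"
  have bdd: "bdd_below (f ` {0..})" using nn by (intro bdd_belowI[of _ 0]) auto
  have "(f \<longlongrightarrow> L) at_top"
  proof (rule decreasing_tendsto)
    show "\<forall>\<^sub>F n in at_top. L \<le> f n"
      using eventually_ge_at_top[of "0::real"]
      by eventually_elim (auto simp: L_def intro!: cInf_lower bdd)
  next
    fix x assume "L < x"
    then obtain y where y: "y \<in> f ` {0..}" "y < x" using cInf_less_iff[of "f ` {0..}" x] bdd L_def by auto
    then obtain n0 where n0: "n0 \<ge> 0" "f n0 < x" by auto
    show "\<forall>\<^sub>F n in at_top. f n < x"
      using eventually_ge_at_top[of n0]
      by eventually_elim (use mono n0 in force)
  qed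
  thus ?thesis by blast
qed


lemma decay_lem:
  fixes S I DS :: "real \<Rightarrow> real" and \<gamma> :: real
  assumes g: "\<gamma> > 0"
    and dS: "\<And>t. t \<ge> 0 \<Longrightarrow> (S has_real_derivative DS t) (at t within {0..})"
    and dI: "\<And>t. t \<ge> 0 \<Longrightarrow> (I has_real_derivative (- DS t - \<gamma> * I t)) (at t within {0..})"
    and DS: "\<And>t. t \<ge> 0 \<Longrightarrow> DS t \<le> 0"
    and Sn: "\<And>t. t \<ge> 0 \<Longrightarrow> S t \<ge> 0" and In: "\<And>t. t \<ge> 0 \<Longrightarrow> I t \<ge> 0"
  shows "(I \<longlongrightarrow> 0) at_top"
proof -
  define V where "V t = S t + I t" for t
  have dV: "((\<lambda>t. - V t) has_real_derivative \<gamma> * I t) (at t within {0..})" if "t \<ge> 0" for t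
    unfolding V_def by (rule DERIV_eq[OF DERIV_minus[OF DERIV_add[OF dS[OF that] dI[OF that]]]]) simp
  have dmS: "((\<lambda>t. - S t) has_real_derivative - DS t) (at t within {0..})" if "t \<ge> 0" for t
    by (rule DERIV_minus[OF dS[OF that]])
  have Vmono: "V y \<le> V x" if "0 \<le> x" "x \<le> y" for x y
  proof -
    have "- V x \<le> - V y"
    proof (rule mono_lem[OF dV that])
      fix t assume "x \<le> t" "t \<le> y"
      thus "0 \<le> \<gamma> * I t" using In[of t] g that by simp
    qed
    thus ?thesis by simp
  qed
  have Smono: "S y \<le> S x" if "0 \<le> x" "x \<le> y" for x y
  proof -
    have "- S x \<le> - S y"
    proof (rule mono_lem[OF dmS that])
      fix t assume "x \<le> t" "t \<le> y"
      thus "0 \<le> - DS t" using DS[of t] that by simp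
    qed
    thus ?thesis by simp
  qed
  have Vnn: "V x \<ge> 0" if "0 \<le> x" for x using Sn[OF that] In[OF that] V_def by simp
  obtain LV where LV: "(V \<longlongrightarrow> LV) at_top" using antitone_lim[of V, OF Vmono Vnn] by blast
  obtain LS where LS: "(S \<longlongrightarrow> LS) at_top" using antitone_lim[of S, OF Smono Sn] by blast
  have "((\<lambda>t. V t - S t) \<longlongrightarrow> LV - LS) at_top" by (rule tendsto_diff[OF LV LS])
  moreover have "(\<lambda>t. V t - S t) = I" by (auto simp: V_def)
  ultimately have IL: "(I \<longlongrightarrow> LV - LS) at_top" by simp
  define lam where "lam = LV - LS"
  have evI: "\<forall>\<^sub>F t in at_top. I t \<ge> 0"
    by (rule eventually_mono[OF eventually_ge_at_top[of "0::real"]]) (rule In)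
  have "lam \<ge> 0"
    using tendsto_lowerbound[OF IL evI] unfolding lam_def by simp
  moreover have "\<not> lam > 0"
  proof
    assume lp: "lam > 0"
    have "\<forall>\<^sub>F t in at_top. I t > lam/2" using order_tendstoD(1)[OF IL[folded lam_def], of "lam/2"] lp by simp
    then obtain T0 where T0: "\<And>t. t \<ge> T0 \<Longrightarrow> I t > lam/2" unfolding eventually_at_top_linorder by auto
    define T1 where "T1 = max T0 0"
    have T1: "T1 \<ge> 0" "\<And>t. t \<ge> T1 \<Longrightarrow> I t > lam/2" using T0 unfolding T1_def by auto
    define W where "W t = - V t - \<gamma> * (lam/2) * t" for t
    have dW: "(W has_real_derivative (\<gamma> * I t - \<gamma> * (lam/2))) (at t within {0..})" if "t \<ge> 0" for t
      unfolding W_def by (rule DERIV_eq[OF DERIV_diff[OF dV[OF that] DERIV_cmult[OF DERIV_ident]]]) simp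
    define t2 where "t2 = T1 + 2 * (V T1 + 1) / (\<gamma> * lam)"
    have VT1: "V T1 \<ge> 0" using Vnn T1(1) by blast
    have "2 * (V T1 + 1) / (\<gamma> * lam) \<ge> 0" using VT1 g lp by (intro divide_nonneg_pos) auto
    hence t2: "T1 \<le> t2" unfolding t2_def by linarith
    have "W T1 \<le> W t2"
    proof (rule mono_lem[OF dW T1(1) t2])
      fix t assume "T1 \<le> t" "t \<le> t2"
      hence "I t > lam/2" using T1 by auto
      hence "\<gamma> * (lam/2) \<le> \<gamma> * I t" using g by (intro mult_left_mono) auto
      thus "0 \<le> \<gamma> * I t - \<gamma> * (lam/2)" by linarith
    qed
    hence "V t2 \<le> V T1 - \<gamma> * (lam/2) * (t2 - T1)" unfolding W_def by (simp add: right_diff_distrib)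
    also have "\<gamma> * (lam/2) * (t2 - T1) = V T1 + 1" unfolding t2_def using g lp by (simp add: field_simps)
    finally have "V t2 \<le> -1" by simp
    moreover have "V t2 \<ge> 0" using Vnn T1(1) t2 by simp
    ultimately show False by simp
  qed
  ultimately have "lam = 0" by simp
  thus ?thesis using IL lam_def by simp
qed



lemma prod_lb:
  fixes c u v M N K :: real
  assumes c: "c \<ge> 0" and u: "u \<ge> -N" and v: "0 \<le> v" "v \<le> M" and N: "N \<ge> 0" and K: "c * M \<le> K"
  shows "c * (u * v) \<ge> -(2 * K * N)"
proof -
  have "u * v \<ge> -N * v" using u v by (intro mult_right_mono) auto
  moreover have "N * v \<le> N * M" using N v by (intro mult_left_mono) auto
  ultimately have uv: "u * v \<ge> -(N * M)" by linarith
  have "c * (u * v) \<ge> c * (-(N * M))" using uv c by (intro mult_left_mono) auto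
  moreover have "c * M * N \<le> K * N" using K N by (intro mult_right_mono) auto
  moreover have "K * N \<ge> 0" using K c v N by (metis mult_nonneg_nonneg order_trans)
  ultimately show ?thesis by (simp add: algebra_simps)
qed

lemma weight_deriv:
  fixes f :: "real \<Rightarrow> real"
  assumes "(f has_real_derivative D) (at t within S)"
  shows "((\<lambda>t. f t * exp (c * t)) has_real_derivative ((D + c * f t) * exp (c * t))) (at t within S)"
  by (rule derivative_eq_intros assms refl | simp add: algebra_simps)+



lemma core:
  fixes SP IP SNP INP IM :: "real \<Rightarrow> real" and a b \<gamma> \<mu> q :: real
  assumes a: "a > 0" and b: "b > 0" and g: "\<gamma> > 0" and m: "\<mu> > 0" and q0: "0 \<le> q" and q1: "q \<le> 1"
    and i1: "SP 0 \<ge> 0" and i2: "IP 0 \<ge> 0" and i3: "SNP 0 \<ge> 0" and i4: "INP 0 \<ge> 0"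
    and i5: "IM 0 \<ge> 0" and i6: "IM 0 \<le> 1"
    and dSP: "\<And>t. t \<ge> 0 \<Longrightarrow> (SP has_real_derivative (-(a*q*IM t*SP t))) (at t within {0..})"
    and dIP: "\<And>t. t \<ge> 0 \<Longrightarrow> (IP has_real_derivative (a*q*IM t*SP t - \<gamma>*IP t)) (at t within {0..})"
    and dSNP: "\<And>t. t \<ge> 0 \<Longrightarrow> (SNP has_real_derivative (-(a*IM t*SNP t))) (at t within {0..})"
    and dINP: "\<And>t. t \<ge> 0 \<Longrightarrow> (INP has_real_derivative (a*IM t*SNP t - \<gamma>*INP t)) (at t within {0..})"
    and dIM: "\<And>t. t \<ge> 0 \<Longrightarrow> (IM has_real_derivative (b*(1-IM t)*(q*IP t+INP t) - \<mu>*IM t)) (at t within {0..})"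
  shows "(IP \<longlongrightarrow> 0) at_top \<and> (INP \<longlongrightarrow> 0) at_top \<and> (IM \<longlongrightarrow> 0) at_top"
proof -
  have cSP: "continuous_on {0..} SP" by (rule deriv_cont[OF dSP])
  have cIP: "continuous_on {0..} IP" by (rule deriv_cont[OF dIP])
  have cSNP: "continuous_on {0..} SNP" by (rule deriv_cont[OF dSNP])
  have cINP: "continuous_on {0..} INP" by (rule deriv_cont[OF dINP])
  have cIM: "continuous_on {0..} IM" by (rule deriv_cont[OF dIM])
  have SPn: "SP t \<ge> 0" if "t \<ge> 0" for t
    by (rule lin_nonneg'[where k="\<lambda>t. -(a*q*IM t)" and f="\<lambda>t. 0", OF dSP _ _ _ i1 that])
      (auto intro!: continuous_intros cIM)
  have SNPn: "SNP t \<ge> 0" if "t \<ge> 0" for t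
    by (rule lin_nonneg'[where k="\<lambda>t. -(a*IM t)" and f="\<lambda>t. 0", OF dSNP _ _ _ i3 that])
      (auto intro!: continuous_intros cIM)
  have d1IM: "((\<lambda>t. 1 - IM t) has_real_derivative (-(b*(1-IM t)*(q*IP t+INP t) - \<mu>*IM t))) (at t within {0..})"
    if "t \<ge> 0" for t
    by (rule DERIV_eq[OF DERIV_diff[OF DERIV_const dIM[OF that]]]) simp
  have IMle: "1 - IM t \<ge> 0" if "t \<ge> 0" for t
    by (rule lin_nonneg'[where k="\<lambda>t. -(b*(q*IP t+INP t)+\<mu>)" and f="\<lambda>t. \<mu>", OF d1IM _ _ _ _ that])
      (use m i6 in \<open>auto intro!: continuous_intros cIM cIP cINP simp: algebra_simps\<close>)
  define G where "G t = min (IP t) (min (INP t) (IM t))" for t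
  have cG: "continuous_on {0..} G" unfolding G_def by (intro continuous_intros cIP cINP cIM)
  have G0: "G 0 \<ge> 0" using i2 i4 i5 by (simp add: G_def)
  have Gn: "G T \<ge> 0" if T: "T \<ge> 0" for T
  proof (rule exit_lem[OF cG G0 _ T])
    fix s :: real assume s0: "s \<ge> 0" and all: "\<forall>t\<in>{0..s}. G t \<ge> 0"
    have "G s \<ge> 0" using all s0 by auto
    hence Ps: "IP s \<ge> 0" "INP s \<ge> 0" "IM s \<ge> 0" unfolding G_def by auto
    obtain M1 where M1: "\<forall>t\<in>{s..s+1}. \<bar>SP t\<bar> \<le> M1" using bound_lem[OF cSP s0] by blast
    obtain M2 where M2: "\<forall>t\<in>{s..s+1}. \<bar>SNP t\<bar> \<le> M2" using bound_lem[OF cSNP s0] by blast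
    have c1: "continuous_on {0..} (\<lambda>t. 1 - IM t)" by (intro continuous_intros cIM)
    obtain M3 where M3: "\<forall>t\<in>{s..s+1}. \<bar>1 - IM t\<bar> \<le> M3" using bound_lem[OF c1 s0] by blast
    have M1p: "M1 \<ge> 0" using M1 s0 by force
    have M2p: "M2 \<ge> 0" using M2 s0 by force
    have M3p: "M3 \<ge> 0" using M3 s0 by force
    define K where "K = a*q*M1 + a*M2 + 2*b*M3 + 1"
    have K1: "a*q*M1 \<ge> 0" "a*M2 \<ge> 0" "2*b*M3 \<ge> 0" using a b q0 M1p M2p M3p by auto
    hence Kp: "K > 0" and K2: "a*q*M1 \<le> K" "a*M2 \<le> K" "2*b*M3 \<le> K" unfolding K_def by linarith+
    show "\<exists>\<delta>>0. \<forall>t1 N. s \<le> t1 \<longrightarrow> t1 \<le> s+\<delta> \<longrightarrow> N \<ge> 0 \<longrightarrow> (\<forall>t\<in>{s..t1}. G t \<ge> -N) \<longrightarrow> G t1 \<ge> -(N/2)"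
    proof (intro exI[of _ "min 1 (1/(4*K))"] conjI allI impI)
      show "min 1 (1/(4*K)) > 0" using Kp by simp
      fix t1 N assume t1: "s \<le> t1" "t1 \<le> s + min 1 (1/(4*K))" and N: "N \<ge> 0"
        and low: "\<forall>t\<in>{s..t1}. G t \<ge> -N"
      have inr: "t \<in> {s..s+1}" "t \<ge> 0" if "s \<le> t" "t \<le> t1" for t using that t1 s0 by auto
      have lowc: "IP t \<ge> -N" "INP t \<ge> -N" "IM t \<ge> -N" if "s \<le> t" "t \<le> t1" for t
        using low that unfolding G_def by auto
      have small: "- (2*K*N) * (t1 - s) \<ge> - (N / 2)" using t1 by (intro small_lem Kp N) auto
      have A1: "IP t1 \<ge> - (2*K*N) * (t1 - s)"
      proof (rule comp_lem[where F="\<lambda>t. a*q*IM t*SP t" and r=\<gamma>, OF dIP])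
        fix t assume t: "s \<le> t" "t \<le> t1"
        have "\<bar>SP t\<bar> \<le> M1" using M1 inr[OF t] by blast
        hence "SP t \<le> M1" by (simp add: abs_le_iff)
        have "(a*q) * (IM t * SP t) \<ge> -(2*K*N)"
          using \<open>SP t \<le> M1\<close> lowc[OF t] K2 N a q0 SPn[of t] inr[OF t] by (intro prod_lb) auto
        thus "a*q*IM t*SP t \<ge> -(2*K*N)" by (simp add: mult.assoc)
      qed (use g s0 t1 Ps Kp N in auto)
      have A2: "INP t1 \<ge> - (2*K*N) * (t1 - s)"
      proof (rule comp_lem[where F="\<lambda>t. a*IM t*SNP t" and r=\<gamma>, OF dINP])
        fix t assume t: "s \<le> t" "t \<le> t1"
        have "\<bar>SNP t\<bar> \<le> M2" using M2 inr[OF t] by blast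
        hence "SNP t \<le> M2" by (simp add: abs_le_iff)
        have "a * (IM t * SNP t) \<ge> -(2*K*N)"
          using \<open>SNP t \<le> M2\<close> lowc[OF t] K2 N a SNPn[of t] inr[OF t] by (intro prod_lb) auto
        thus "a*IM t*SNP t \<ge> -(2*K*N)" by (simp add: mult.assoc)
      qed (use g s0 t1 Ps Kp N in auto)
      have A3: "IM t1 \<ge> - (2*K*N) * (t1 - s)"
      proof (rule comp_lem[where F="\<lambda>t. b*(1-IM t)*(q*IP t+INP t)" and r=\<mu>, OF dIM])
        fix t assume t: "s \<le> t" "t \<le> t1"
        have qIP: "q * IP t \<ge> -N"
        proof (cases "IP t \<ge> 0")
          case True
          hence "q * IP t \<ge> 0" using q0 by simp
          thus ?thesis using N by linarith
        next
          case False
          hence "q * IP t \<ge> 1 * IP t" using q1 by (intro mult_right_mono_neg) auto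
          thus ?thesis using lowc[OF t] by simp
        qed
        have u: "(q*IP t+INP t)/2 \<ge> -N" using qIP lowc[OF t] N by simp
        have "\<bar>1 - IM t\<bar> \<le> M3" using M3 inr[OF t] by blast
        hence "1 - IM t \<le> M3" by (simp add: abs_le_iff)
        have "(2*b) * (((q*IP t+INP t)/2) * (1 - IM t)) \<ge> -(2*K*N)"
          using \<open>1 - IM t \<le> M3\<close> inr[OF t] u K2 N b IMle[of t] by (intro prod_lb) auto
        thus "b*(1-IM t)*(q*IP t+INP t) \<ge> -(2*K*N)" by (simp add: algebra_simps)
      qed (use m s0 t1 Ps Kp N in auto)
      show "G t1 \<ge> -(N/2)" using A1 A2 A3 small unfolding G_def by linarith
    qed
  qed
  have IPn: "IP t \<ge> 0" and INPn: "INP t \<ge> 0" and IMn: "IM t \<ge> 0" if "t \<ge> 0" for t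
    using Gn[OF that] unfolding G_def by auto
  have L1: "(IP \<longlongrightarrow> 0) at_top"
  proof (rule decay_lem[where S=SP and DS="\<lambda>t. -(a*q*IM t*SP t)", OF g dSP])
    fix t :: real assume t: "t \<ge> 0"
    show "(IP has_real_derivative (- (- (a*q*IM t*SP t)) - \<gamma> * IP t)) (at t within {0..})"
      using dIP[OF t] by simp
    show "-(a*q*IM t*SP t) \<le> 0" using a q0 IMn[OF t] SPn[OF t] by simp
  qed (use SPn IPn in auto)
  have L2: "(INP \<longlongrightarrow> 0) at_top"
  proof (rule decay_lem[where S=SNP and DS="\<lambda>t. -(a*IM t*SNP t)", OF g dSNP])
    fix t :: real assume t: "t \<ge> 0"
    show "(INP has_real_derivative (- (- (a*IM t*SNP t)) - \<gamma> * INP t)) (at t within {0..})"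
      using dINP[OF t] by simp
    show "-(a*IM t*SNP t) \<le> 0" using a IMn[OF t] SNPn[OF t] by simp
  qed (use SNPn INPn in auto)
  define gf where "gf t = b*(1-IM t)*(q*IP t+INP t)" for t
  have hl: "((\<lambda>t. b * (q*IP t + INP t)) \<longlongrightarrow> b * (q*0 + 0)) at_top"
    by (rule tendsto_mult_left[OF tendsto_add[OF tendsto_mult_left[OF L1] L2]])
  have gl: "(gf \<longlongrightarrow> 0) at_top"
  proof (rule tendsto_sandwich[where f="\<lambda>t. 0" and h="\<lambda>t. b * (q*IP t + INP t)"])
    show "\<forall>\<^sub>F t in at_top. 0 \<le> gf t"
    proof (rule eventually_mono[OF eventually_ge_at_top[of "0::real"]])
      fix t :: real assume t: "t \<ge> 0"
      have "q*IP t+INP t \<ge> 0" using q0 IPn[OF t] INPn[OF t] by simp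
      thus "0 \<le> gf t" unfolding gf_def using b IMle[OF t] by simp
    qed
    show "\<forall>\<^sub>F t in at_top. gf t \<le> b * (q*IP t + INP t)"
    proof (rule eventually_mono[OF eventually_ge_at_top[of "0::real"]])
      fix t :: real assume t: "t \<ge> 0"
      have h: "q*IP t+INP t \<ge> 0" using q0 IPn[OF t] INPn[OF t] by simp
      have "(1 - IM t) * (q*IP t+INP t) \<le> 1 * (q*IP t+INP t)"
        using IMn[OF t] h by (intro mult_right_mono) auto
      thus "gf t \<le> b * (q*IP t + INP t)" unfolding gf_def using b
        by (simp add: mult.assoc mult_left_mono)
    qed
  qed (use hl in auto)
  have L3: "(IM \<longlongrightarrow> 0) at_top"
  proof (rule order_tendstoI)
    fix y :: real assume "y < 0"
    thus "\<forall>\<^sub>F t in at_top. y < IM t"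
      using IMn by (intro eventually_mono[OF eventually_ge_at_top[of "0::real"]]) force
  next
    fix \<epsilon> :: real assume ep: "\<epsilon> > 0"
    have "\<forall>\<^sub>F t in at_top. gf t < \<mu> * \<epsilon> / 2" using order_tendstoD(2)[OF gl, of "\<mu> * \<epsilon> / 2"] ep m by simp
    then obtain T0' where T0': "\<And>t. t \<ge> T0' \<Longrightarrow> gf t < \<mu> * \<epsilon> / 2"
      unfolding eventually_at_top_linorder by auto
    define T0 where "T0 = max T0' 0"
    have T0: "T0 \<ge> 0" "\<And>t. t \<ge> T0 \<Longrightarrow> gf t < \<mu> * \<epsilon> / 2" using T0' unfolding T0_def by auto
    define W where "W t = (IM t - \<epsilon>/2) * exp (\<mu> * t)" for t
    have dW: "((\<lambda>t. - W t) has_real_derivative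
        (- ((b*(1-IM t)*(q*IP t+INP t) - \<mu>*IM t - 0 + \<mu> * (IM t - \<epsilon>/2)) * exp (\<mu> * t)))) (at t within {0..})"
      if "t \<ge> 0" for t
      unfolding W_def by (rule DERIV_minus[OF weight_deriv[OF DERIV_diff[OF dIM[OF that] DERIV_const]]])
    have Wb: "W t \<le> W T0" if "t \<ge> T0" for t
    proof -
      have "- W T0 \<le> - W t"
      proof (rule mono_lem[OF dW T0(1) that])
        fix x assume x: "T0 \<le> x" "x \<le> t"
        have "gf x < \<mu> * \<epsilon> / 2" using T0 x by auto
        hence "b*(1-IM x)*(q*IP x+INP x) - \<mu>*IM x - 0 + \<mu> * (IM x - \<epsilon>/2) \<le> 0"
          unfolding gf_def by (simp add: algebra_simps)
        thus "0 \<le> - ((b*(1-IM x)*(q*IP x+INP x) - \<mu>*IM x - 0 + \<mu> * (IM x - \<epsilon>/2)) * exp (\<mu> * x))"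
          by (simp add: mult_nonpos_nonneg)
      qed
      thus ?thesis by simp
    qed
    define E where "E = exp (\<mu> * T0)"
    have WT0: "W T0 \<le> E" unfolding W_def E_def using IMle[OF T0(1)] ep by simp
    have lim0: "((\<lambda>t. E * exp (- (\<mu> * t))) \<longlongrightarrow> 0) at_top"
    proof -
      have "((\<lambda>t. exp (- (\<mu> * t))) \<longlongrightarrow> 0) at_top" using m by real_asymp
      from tendsto_mult_left[OF this, of E] show ?thesis by simp
    qed
    have ev2: "\<forall>\<^sub>F t in at_top. E * exp (- (\<mu> * t)) < \<epsilon>/2"
      using order_tendstoD(2)[OF lim0, of "\<epsilon>/2"] ep by simp
    show "\<forall>\<^sub>F t in at_top. IM t < \<epsilon>"
      using ev2 eventually_ge_at_top[of T0]
    proof eventually_elim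
      case (elim t)
      have "W t \<le> E" using Wb[OF elim(2)] WT0 by simp
      hence "(IM t - \<epsilon>/2) * exp (\<mu> * t) \<le> E" unfolding W_def .
      hence "IM t - \<epsilon>/2 \<le> E / exp (\<mu> * t)" by (simp add: pos_le_divide_eq)
      also have "E / exp (\<mu> * t) = E * exp (- (\<mu> * t))" by (simp add: exp_minus field_simps)
      finally show ?case using elim(1) by simp
    qed
  qed
  show ?thesis using L1 L2 L3 by simp
qed


theorem mainTheorem6:
  fixes SP IP SNP INP IM :: "real \<Rightarrow> real"
    and bHM bMH \<rho> \<gamma> \<mu> l p q :: real
  assumes "bHM > 0" "bMH > 0" "\<rho> > 0" "\<gamma> > 0" "\<mu> > 0" "l \<ge> 0"
    and "0 \<le> p" "p \<le> 1" "0 \<le> q" "q \<le> 1"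
    and "c_pq p q + l > 0"
    and "(SP 0, IP 0, SNP 0, INP 0, IM 0) \<in> Omega"
    and "\<And>t. t \<ge> 0 \<Longrightarrow> (SP has_real_derivative
            (- bHM * \<rho> * IM t * (q * SP t) / (c_pq p q + l))) (at t within {0..})"
    and "\<And>t. t \<ge> 0 \<Longrightarrow> (IP has_real_derivative
            (bHM * \<rho> * IM t * (q * SP t) / (c_pq p q + l) - \<gamma> * IP t)) (at t within {0..})"
    and "\<And>t. t \<ge> 0 \<Longrightarrow> (SNP has_real_derivative
            (- bHM * \<rho> * IM t * SNP t / (c_pq p q + l))) (at t within {0..})"
    and "\<And>t. t \<ge> 0 \<Longrightarrow> (INP has_real_derivative
            (bHM * \<rho> * IM t * SNP t / (c_pq p q + l) - \<gamma> * INP t)) (at t within {0..})"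
    and "\<And>t. t \<ge> 0 \<Longrightarrow> (IM has_real_derivative
            (bMH * (1 - IM t) * (q * IP t + INP t) / (c_pq p q + l) - \<mu> * IM t)) (at t within {0..})"
  shows "(IP \<longlongrightarrow> 0) at_top \<and> (INP \<longlongrightarrow> 0) at_top \<and> (IM \<longlongrightarrow> 0) at_top"
proof -
  define C where "C = c_pq p q + l"
  define a where "a = bHM * \<rho> / C"
  define b where "b = bMH / C"
  have Cp: "C > 0" using assms(11) C_def by simp
  have ap: "a > 0" unfolding a_def using assms(1,3) Cp by simp
  have bp: "b > 0" unfolding b_def using assms(2) Cp by simp
  have om: "SP 0 \<ge> 0" "IP 0 \<ge> 0" "SNP 0 \<ge> 0" "INP 0 \<ge> 0" "IM 0 \<ge> 0" "IM 0 \<le> 1"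
    using assms(12) unfolding Omega_def by auto
  show ?thesis
  proof (rule core[where SP=SP and IP=IP and SNP=SNP and INP=INP and IM=IM, OF ap bp assms(4) assms(5) assms(9) assms(10) om])
    fix t :: real assume t: "t \<ge> 0"
    show "(SP has_real_derivative (-(a*q*IM t*SP t))) (at t within {0..})"
      by (rule DERIV_eq[OF assms(13)[OF t]]) (simp add: a_def C_def field_simps)
    show "(IP has_real_derivative (a*q*IM t*SP t - \<gamma>*IP t)) (at t within {0..})"
      by (rule DERIV_eq[OF assms(14)[OF t]]) (simp add: a_def C_def field_simps)
    show "(SNP has_real_derivative (-(a*IM t*SNP t))) (at t within {0..})"
      by (rule DERIV_eq[OF assms(15)[OF t]]) (simp add: a_def C_def field_simps)
    show "(INP has_real_derivative (a*IM t*SNP t - \<gamma>*INP t)) (at t within {0..})"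
      by (rule DERIV_eq[OF assms(16)[OF t]]) (simp add: a_def C_def field_simps)
    show "(IM has_real_derivative (b*(1-IM t)*(q*IP t+INP t) - \<mu>*IM t)) (at t within {0..})"
      by (rule DERIV_eq[OF assms(17)[OF t]]) (simp add: b_def C_def field_simps)
  qed
qed

end
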